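(* Let $n\ge2$ and $|\psi\rangle_{ABS}\in\mathbb{C}^2\otimes\mathbb{C}^2\otimes\mathbb{C}^n$. For orthonormal bases $\{|i\rangle_A\}_{i=0,1}$, $\{|j\rangle_B\}_{j=0,1}$, $\{|l\rangle_S\}_{l=1,\dots,n}$, write $a^l_{ij}={}_A\langle i|{}_B\langle j|{}_S\langle l|\psi\rangle_{ABS}$ and let $A^l$ be the $2\times2$ matrix with entries $(A^l)_{ij}=a^l_{ij}$. Then there exist orthonormal bases of Alice's, Bob's and Sapna's spaces such that the matrices $A^{l\dagger}A^l$ are diagonal for all $l$; similarly, there exist (possibly different) orthonormal bases such that the matrices $A^lA^{l\dagger}$ are diagonal for all $l$. *)

theory Defs
  imports Complex_Main
begin

text \<open>A state psi in C^2 (x) C^2 (x) C^d is represented by its coefficient function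
  psi i j l (i<2, j<2, l<d) in the standard product basis.
  An orthonormal basis of C^d is a family e k (k<d) of vectors with components e k t (t<d)
  satisfying the orthonormality relations (d orthonormal vectors in C^d form a basis).\<close>

definition orthonormal_basis :: "nat \<Rightarrow> (nat \<Rightarrow> nat \<Rightarrow> complex) \<Rightarrow> bool" where
  "orthonormal_basis d e \<longleftrightarrow>
     (\<forall>k<d. \<forall>m<d. (\<Sum>t<d. cnj (e k t) * e m t) = (if k = m then 1 else 0))"

definition coeff ::
  "nat \<Rightarrow> (nat \<Rightarrow> nat \<Rightarrow> complex) \<Rightarrow> (nat \<Rightarrow> nat \<Rightarrow> complex) \<Rightarrow> (nat \<Rightarrow> nat \<Rightarrow> complex)
   \<Rightarrow> (nat \<Rightarrow> nat \<Rightarrow> nat \<Rightarrow> complex) \<Rightarrow> nat \<Rightarrow> nat \<Rightarrow> nat \<Rightarrow> complex" where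
  "coeff d eA eB eS psi l i j =
     (\<Sum>i'<2. \<Sum>j'<2. \<Sum>l'<d. cnj (eA i i') * cnj (eB j j') * cnj (eS l l') * psi i' j' l')"

definition adj_mult :: "(nat \<Rightarrow> nat \<Rightarrow> complex) \<Rightarrow> nat \<Rightarrow> nat \<Rightarrow> complex" where
  "adj_mult M i k = (\<Sum>j<2. cnj (M j i) * M j k)"

definition mult_adj :: "(nat \<Rightarrow> nat \<Rightarrow> complex) \<Rightarrow> nat \<Rightarrow> nat \<Rightarrow> complex" where
  "mult_adj M i k = (\<Sum>j<2. M i j * cnj (M k j))"

definition diagonal2 :: "(nat \<Rightarrow> nat \<Rightarrow> complex) \<Rightarrow> bool" where
  "diagonal2 N \<longleftrightarrow> (\<forall>i<2. \<forall>k<2. i \<noteq> k \<longrightarrow> N i k = 0)"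

end

theory Submission imports Defs begin
definition ip :: "nat \<Rightarrow> (nat \<Rightarrow> complex) \<Rightarrow> (nat \<Rightarrow> complex) \<Rightarrow> complex" where
 "ip n x y = (\<Sum>t<n. cnj (x t) * y t)"
definition bil :: "nat \<Rightarrow> (nat \<Rightarrow> nat \<Rightarrow> complex) \<Rightarrow> (nat \<Rightarrow> complex) \<Rightarrow> (nat \<Rightarrow> complex) \<Rightarrow> complex" where
 "bil n K x y = (\<Sum>s<n. \<Sum>t<n. cnj (x s) * K s t * y t)"

lemma bil_expand:
  "bil n K (\<lambda>t. a * x t + b * z t) (\<lambda>t. a * x t + b * z t) =
   cnj a * a * bil n K x x + cnj a * b * bil n K x z + cnj b * a * bil n K z x + cnj b * b * bil n K z z"
  unfolding bil_def
  by (simp add: sum.distrib sum_distrib_left algebra_simps)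

lemma ip_expand:
  "ip n (\<lambda>t. a * x t + b * z t) (\<lambda>t. a * x t + b * z t) =
   cnj a * a * ip n x x + cnj a * b * ip n x z + cnj b * a * ip n z x + cnj b * b * ip n z z"
  unfolding ip_def
  by (simp add: sum.distrib sum_distrib_left algebra_simps)

lemma sdl: "(k::nat) < n \<Longrightarrow> (\<Sum>t<n. (if t = k then 1 else 0) * f t) = (f k::complex)"
proof -
  assume "k < n"
  have "(\<Sum>t<n. (if t = k then 1 else 0) * f t) = (\<Sum>t<n. if t = k then f t else 0)"
    by (rule sum.cong) auto
  also have "\<dots> = f k" using \<open>k < n\<close> by simp
  finally show ?thesis .
qed

lemma sdr: "(k::nat) < n \<Longrightarrow> (\<Sum>t<n. f t * (if t = k then 1 else 0)) = (f k::complex)"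
  using sdl[of k n f] by (simp add: mult.commute)

lemma sdl2: "(k::nat) < n \<Longrightarrow> (\<Sum>t<n. (if k = t then 1 else 0) * f t) = (f k::complex)"
  using sdl[of k n f] by (simp add: eq_commute[of k])

lemma sdr2: "(k::nat) < n \<Longrightarrow> (\<Sum>t<n. f t * (if k = t then 1 else 0)) = (f k::complex)"
  using sdr[of k n f] by (simp add: eq_commute[of k])

lemma cnj_ind: "cnj (if t = k then 1 else 0) = (if t = k then 1 else (0::complex))"
  by simp

lemma bil_unit: "(k::nat) < n \<Longrightarrow> bil n K (\<lambda>t. if t = k then 1 else 0) (\<lambda>t. if t = k then 1 else 0) = K k k"
  unfolding bil_def cnj_ind by (simp add: sdl sdr)

lemma ip_unit: "(k::nat) < n \<Longrightarrow> ip n (\<lambda>t. if t = k then 1 else 0) (\<lambda>t. if t = k then 1 else 0) = 1"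
  unfolding ip_def cnj_ind by (simp add: sdl)
lemma avg_alg: fixes S K c :: complex assumes "c \<noteq> 0" "c + 1 \<noteq> 0" shows
  "S / c + (K - S / c) / (c + 1) = (S + K) / (c + 1)"
proof -
  have "S / c + (K - S / c) / (c + 1) = ((S / c) * (c + 1) + (K - S / c)) / (c + 1)"
    using assms by (simp add: add_divide_distrib)
  also have "(S / c) * (c + 1) + (K - S / c) = S + K" using assms by (simp add: algebra_simps add_divide_distrib)
  finally show ?thesis .
qed

lemma seg:
  assumes kn: "k < n" and xs: "\<forall>t\<ge>k. x t = 0" and xu: "ip n x x = 1"
    and t0: "0 \<le> \<tau>" and t1: "\<tau> \<le> 1"
  shows "\<exists>y. (\<forall>t\<ge>Suc k. y t = 0) \<and> ip n y y = 1 \<and>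
             bil n K y y = bil n K x x + of_real \<tau> * (K k k - bil n K x x)"
proof (cases "K k k - bil n K x x = 0")
  case True
  then show ?thesis using xs xu by (intro exI[of _ x]) auto
next
  case False
  define Q where "Q = bil n K x x"
  define \<delta> where "\<delta> = K k k - Q"
  have dnz: "\<delta> \<noteq> 0" using False by (simp add: \<delta>_def Q_def)
  define e where "e = (\<lambda>t::nat. if t = k then (1::complex) else 0)"
  define p where "p = bil n K x e"
  define q where "q = bil n K e x"
  have kin: "k \<in> {..<n}" using kn by simp
  have se1: "(\<Sum>t<n. f t * e t) = f k" for f :: "nat \<Rightarrow> complex"
  proof -
    have "(\<Sum>t<n. f t * e t) = (\<Sum>t<n. if t = k then f t else 0)" by (rule sum.cong) (auto simp: e_def)
    then show ?thesis using kin by simp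
  qed
  have se2: "(\<Sum>t<n. e t * f t) = f k" for f :: "nat \<Rightarrow> complex"
    using se1[of f] by (simp add: mult.commute)
  have se3: "(\<Sum>t<n. cnj (e t) * f t) = f k" for f :: "nat \<Rightarrow> complex"
    using se2[of f] by (simp add: e_def if_distrib cong: if_cong)
  have bee: "bil n K e e = K k k"
    unfolding bil_def by (simp add: se1 se3)
  have ixe: "ip n x e = 0" unfolding ip_def using xs by (simp add: se1)
  have iex: "ip n e x = 0" unfolding ip_def using xs by (simp add: se3)
  have iee: "ip n e e = 1" unfolding ip_def by (subst se3) (simp add: e_def)
  define D where "D = p * cnj \<delta> - cnj (q * cnj \<delta>)"
  define w where "w = (if D = 0 then 1 else cnj D / of_real (cmod D))"
  have wn: "cnj w * w = 1"
  proof (cases "D = 0")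
    case False
    then have "cnj D * D = of_real ((cmod D)^2)" by (metis complex_norm_square mult.commute)
    then show ?thesis using False unfolding w_def by (simp add: field_simps power2_eq_square)
  qed (simp add: w_def)
  have wD: "Im (w * D) = 0"
  proof (cases "D = 0")
    case False
    then have "cnj D * D = of_real ((cmod D)^2)" by (metis complex_norm_square mult.commute)
    then have "w * D = of_real (cmod D)" using False unfolding w_def
      by (simp add: field_simps power2_eq_square)
    then show ?thesis by simp
  qed (simp add: w_def)
  define cr where "cr = w * p + cnj w * q"
  have "Im (cr * cnj \<delta>) = Im (w * D)"
    unfolding cr_def D_def by (simp add: algebra_simps)
  then have imz: "Im (cr * cnj \<delta>) = 0" using wD by simp
  define \<sigma> where "\<sigma> = Re (cr * cnj \<delta>) / (cmod \<delta>)^2"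
  have dd: "\<delta> * cnj \<delta> = of_real ((cmod \<delta>)^2)" by (metis complex_norm_square)
  have "cr * cnj \<delta> = of_real (Re (cr * cnj \<delta>))" using imz by (simp add: complex_eq_iff)
  then have "cr * cnj \<delta> = of_real \<sigma> * (\<delta> * cnj \<delta>)" using dnz dd unfolding \<sigma>_def
    by simp
  then have crs: "cr = of_real \<sigma> * \<delta>" using dnz by (simp add: mult.assoc)
  define g where "g = (\<lambda>u::real. u + \<sigma> * sqrt (u * (1 - u)))"
  have "continuous_on {0..1} g" unfolding g_def by (intro continuous_intros)
  moreover have "g 0 \<le> \<tau>" "\<tau> \<le> g 1" using t0 t1 by (auto simp: g_def)
  ultimately obtain u where u0: "0 \<le> u" and u1: "u \<le> 1" and gu: "g u = \<tau>"
    using IVT'[of g 0 \<tau> 1] by auto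
  define a where "a = complex_of_real (sqrt (1 - u))"
  define b where "b = complex_of_real (sqrt u) * w"
  define y where "y = (\<lambda>t. a * x t + b * e t)"
  have aa: "cnj a * a = of_real (1 - u)" unfolding a_def using u1
    by (simp flip: of_real_mult)
  have bb: "cnj b * b = of_real u" unfolding b_def using u0
    by (simp add: wn mult.assoc mult.left_commute[of "cnj w"] flip: of_real_mult)
  have ab: "cnj a * b = of_real (sqrt (u * (1 - u))) * w" unfolding a_def b_def
    by (simp add: real_sqrt_mult mult.commute)
  have ba: "cnj b * a = of_real (sqrt (u * (1 - u))) * cnj w" unfolding a_def b_def
    by (simp add: real_sqrt_mult mult.commute)
  have "ip n y y = 1" unfolding y_def ip_expand aa bb ab ba ixe iex iee xu
    by (simp flip: of_real_add)
  moreover have "bil n K y y = bil n K x x + of_real \<tau> * (K k k - bil n K x x)"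
  proof -
    have "bil n K y y = of_real (1 - u) * Q + of_real (sqrt (u * (1 - u))) * cr + of_real u * K k k"
      unfolding y_def bil_expand aa bb ab ba bee Q_def cr_def p_def q_def
      by (simp add: algebra_simps)
    also have "\<dots> = Q + of_real (g u) * \<delta>"
      unfolding crs g_def \<delta>_def by (simp add: algebra_simps)
    finally show ?thesis using gu by (simp add: Q_def \<delta>_def)
  qed
  moreover have "\<forall>t\<ge>Suc k. y t = 0" using xs unfolding y_def e_def by auto
  ultimately show ?thesis by blast
qed

lemma avg:
  assumes "1 \<le> k" "k \<le> n"
  shows "\<exists>x. (\<forall>t\<ge>k. x t = 0) \<and> ip n x x = 1 \<and> bil n K x x = (\<Sum>i<k. K i i) / of_nat k"
  using assms
proof (induction k)
  case 0 then show ?case by simp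
next
  case (Suc k)
  show ?case
  proof (cases "k = 0")
    case True
    define x where "x = (\<lambda>t::nat. if t = 0 then (1::complex) else 0)"
    have n0: "0 < n" using Suc by simp
    have "ip n x x = 1" unfolding x_def using n0 by (rule ip_unit)
    moreover have "bil n K x x = K 0 0" unfolding x_def using n0 by (rule bil_unit)
    ultimately show ?thesis using True by (intro exI[of _ x]) (auto simp: x_def)
  next
    case False
    then obtain x where xs: "\<forall>t\<ge>k. x t = 0" and xu: "ip n x x = 1"
      and xq: "bil n K x x = (\<Sum>i<k. K i i) / of_nat k" using Suc by auto
    have kn: "k < n" using Suc by simp
    obtain y where ys: "\<forall>t\<ge>Suc k. y t = 0" and yu: "ip n y y = 1"
      and yq: "bil n K y y = bil n K x x + of_real (1 / real (Suc k)) * (K k k - bil n K x x)"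
      using seg[OF kn xs xu, of "1 / real (Suc k)" K] by auto
    have k0: "(of_nat k::complex) \<noteq> 0" using False by simp
    have k1: "(of_nat (Suc k)::complex) \<noteq> 0" by (metis of_nat_eq_0_iff nat.distinct(1))
    have "bil n K y y = (\<Sum>i<k. K i i) / of_nat k + (K k k - (\<Sum>i<k. K i i) / of_nat k) / of_nat (Suc k)"
      unfolding yq xq by (simp add: divide_inverse mult.commute)
    also have "\<dots> = ((\<Sum>i<k. K i i) + K k k) / of_nat (Suc k)"
      using avg_alg[OF k0, of "\<Sum>i<k. K i i" "K k k"] k1 by (simp add: add.commute)
    finally have "bil n K y y = (\<Sum>i<Suc k. K i i) / of_nat (Suc k)" by simp
    then show ?thesis using ys yu by blast
  qed
qed

definition tr :: "nat \<Rightarrow> (nat \<Rightarrow> nat \<Rightarrow> complex) \<Rightarrow> complex" where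
  "tr n K = (\<Sum>i<n. K i i)"

lemma NR:
  assumes "1 \<le> n" "tr n K = 0"
  shows "\<exists>x. ip n x x = 1 \<and> bil n K x x = 0"
  using avg[OF assms(1) order_refl, of K] assms(2) by (auto simp: tr_def)


lemma unitary_from_H:
  assumes herm: "\<forall>s<m. \<forall>t<m. cnj (H s t) = H t s"
    and inv: "\<forall>s<m. \<forall>t<m. (\<Sum>k<m. H s k * H k t) = (if s = t then 1 else 0)"
    and om: "cnj \<omega> * \<omega> = 1"
  shows "orthonormal_basis m (\<lambda>k t. \<omega> * H t k) \<and>
    (\<forall>s<m. \<forall>t<m. (\<Sum>k<m. cnj (\<omega> * H s k) * (\<omega> * H t k)) = (if s = t then 1 else 0))"
proof -
  have "(\<Sum>t<m. cnj (\<omega> * H t k) * (\<omega> * H t j)) = (if k = j then 1 else 0)" if "k < m" "j < m" for k j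
  proof -
    have "(\<Sum>t<m. cnj (\<omega> * H t k) * (\<omega> * H t j)) = (\<Sum>t<m. H k t * H t j)"
      by (rule sum.cong) (use herm that om in \<open>auto simp: algebra_simps\<close>)
    then show ?thesis using inv that by simp
  qed
  moreover have "(\<Sum>k<m. cnj (\<omega> * H s k) * (\<omega> * H t k)) = (if s = t then 1 else 0)" if "s < m" "t < m" for s t
  proof -
    have "(\<Sum>k<m. cnj (\<omega> * H s k) * (\<omega> * H t k)) = (\<Sum>k<m. H t k * H k s)"
      by (rule sum.cong) (use herm that om in \<open>auto simp: algebra_simps\<close>)
    then show ?thesis using inv that by auto
  qed
  ultimately show ?thesis unfolding orthonormal_basis_def by blast
qed

lemma hh:
  assumes xu: "ip m x x = 1" and m0: "0 < m"
  shows "\<exists>u. orthonormal_basis m u \<and>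
     (\<forall>s<m. \<forall>t<m. (\<Sum>k<m. cnj (u k s) * u k t) = (if s = t then 1 else 0)) \<and> (\<forall>t<m. u 0 t = x t)"
proof -
  define r where "r = cmod (x 0)"
  define \<omega> where "\<omega> = (if x 0 = 0 then 1 else x 0 / of_real r)"
  have om: "cnj \<omega> * \<omega> = 1"
  proof (cases "x 0 = 0")
    case False
    then have "cnj (x 0) * x 0 = of_real (r^2)" unfolding r_def by (metis complex_norm_square mult.commute)
    then show ?thesis using False unfolding \<omega>_def r_def by (simp add: field_simps power2_eq_square)
  qed (simp add: \<omega>_def)
  have x0: "x 0 = of_real r * \<omega>" by (cases "x 0 = 0") (auto simp: \<omega>_def r_def)
  define d where "d = (\<lambda>t::nat. if t = 0 then (1::complex) else 0)"
  define W where "W = (\<lambda>t. x t - d t * \<omega>)"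
  define N where "N = (\<Sum>t<m. cnj (W t) * W t)"
  have NR: "N = of_real (\<Sum>t<m. (cmod (W t))^2)"
    unfolding N_def of_real_sum by (rule sum.cong) (simp_all add: mult.commute flip: complex_norm_square)
  have sd1: "(\<Sum>t<m. cnj (x t) * d t) = cnj (x 0)" unfolding d_def using m0 by (rule sdr)
  have sd2: "(\<Sum>t<m. d t * x t) = x 0" unfolding d_def using m0 by (rule sdl)
  have sd3: "(\<Sum>t<m. d t * d t) = 1" unfolding d_def using m0 by (subst sdl) auto
  have sd4: "(\<Sum>t<m. cnj (x t) * x t) = 1" using xu by (simp add: ip_def)
  have cd: "cnj (d t) = d t" for t by (simp add: d_def)
  have "N = (\<Sum>t<m. cnj (x t) * x t - cnj \<omega> * (d t * x t) - \<omega> * (cnj (x t) * d t) + cnj \<omega> * \<omega> * (d t * d t))"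
    unfolding N_def W_def by (rule sum.cong) (auto simp: cd algebra_simps)
  also have "\<dots> = 1 - cnj \<omega> * x 0 - \<omega> * cnj (x 0) + 1"
    by (simp add: sum.distrib sum_subtractf sd1 sd2 sd3 sd4 om flip: sum_distrib_left)
  also have "\<dots> = 2 - 2 * of_real r" unfolding x0 using om by (simp add: algebra_simps)
  finally have N2: "N = 2 - 2 * of_real r" .
  show ?thesis
  proof (cases "N = 0")
    case True
    then have "(\<Sum>t<m. (cmod (W t))^2) = 0" using NR by (metis of_real_eq_0_iff)
    then have "\<forall>t<m. W t = 0" by (subst (asm) sum_nonneg_eq_0_iff) auto
    then have xt: "\<forall>t<m. x t = d t * \<omega>" by (auto simp: W_def)
    define H where "H = (\<lambda>s t::nat. if s = t then (1::complex) else 0)"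
    have h1: "\<forall>s<m. \<forall>t<m. cnj (H s t) = H t s" by (simp add: H_def)
    have h2: "\<forall>s<m. \<forall>t<m. (\<Sum>k<m. H s k * H k t) = (if s = t then 1 else 0)"
      unfolding H_def by (simp add: sdr)
    have "\<forall>t<m. \<omega> * H t 0 = x t" using xt by (auto simp: H_def d_def)
    then show ?thesis using unitary_from_H[OF h1 h2 om] by (intro exI[of _ "\<lambda>k t. \<omega> * H t k"]) auto
  next
    case False
    define H where "H = (\<lambda>s t. (if s = t then (1::complex) else 0) - 2 * W s * cnj (W t) / N)"
    have cN: "cnj N = N" using NR by simp
    have h1: "\<forall>s<m. \<forall>t<m. cnj (H s t) = H t s" by (auto simp: H_def cN mult.commute)
    have h2: "(\<Sum>k<m. H s k * H k t) = (if s = t then 1 else 0)" if "s < m" "t < m" for s t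
    proof -
      have "(\<Sum>k<m. H s k * H k t) = (\<Sum>k<m. (if s = k then 1 else 0) * (if k = t then 1 else 0)
          - (if s = k then 1 else 0) * (2 * W k * cnj (W t) / N)
          - (2 * W s * cnj (W k) / N) * (if k = t then 1 else 0)
          + 4 * W s * cnj (W t) / (N * N) * (cnj (W k) * W k))"
        unfolding H_def by (rule sum.cong) (auto simp: algebra_simps)
      also have "\<dots> = (if s = t then 1 else 0) - 2 * W s * cnj (W t) / N - 2 * W s * cnj (W t) / N
          + 4 * W s * cnj (W t) / (N * N) * N"
      proof -
        have f1: "(\<Sum>k<m. (if s = k then 1 else 0) * (if k = t then (1::complex) else 0)) = (if s = t then 1 else 0)"
          using that by (simp add: sdl2)
        have f2: "(\<Sum>k<m. (if s = k then 1 else 0) * (2 * W k * cnj (W t) / N)) = 2 * W s * cnj (W t) / N"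
          using sdl2[OF that(1), of "\<lambda>k. 2 * W k * cnj (W t) / N"] by simp
        have f3: "(\<Sum>k<m. (2 * W s * cnj (W k) / N) * (if k = t then 1 else 0)) = 2 * W s * cnj (W t) / N"
          using sdr[OF that(2), of "\<lambda>k. 2 * W s * cnj (W k) / N"] by simp
        have f4: "(\<Sum>k<m. 4 * W s * cnj (W t) / (N * N) * (cnj (W k) * W k)) = 4 * W s * cnj (W t) / (N * N) * N"
          by (simp add: N_def sum_distrib_left)
        show ?thesis by (simp only: sum.distrib sum_subtractf f1 f2 f3 f4)
      qed
      also have "\<dots> = (if s = t then 1 else 0)" using False by (simp add: field_simps)
      finally show ?thesis .
    qed
    have r1: "r \<noteq> 1" using False N2 by auto
    have W0: "W 0 = of_real (r - 1) * \<omega>" by (simp add: W_def d_def x0 algebra_simps)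
    have "\<omega> * H t 0 = x t" for t
    proof -
      have E: "2 * cnj (W 0) / N = - cnj \<omega>"
        unfolding W0 N2 using r1 by (simp add: field_simps)
      have e2: "2 * W t * cnj (W 0) / N = W t * (2 * cnj (W 0) / N)" by simp
      have "H t 0 = d t + W t * cnj \<omega>" unfolding H_def d_def e2 E by simp
        hence "\<omega> * H t 0 = \<omega> * d t + W t * (cnj \<omega> * \<omega>)" by (simp add: algebra_simps)
      then show ?thesis using om by (simp add: W_def)
    qed
    then show ?thesis using unitary_from_H[OF h1 _ om] h2 by (intro exI[of _ "\<lambda>k t. \<omega> * H t k"]) auto
  qed
qed

lemma comb_bil:
  "bil m K (\<lambda>t. \<Sum>i<m. c i * u i t) (\<lambda>t. \<Sum>j<m. d j * u j t) =
   (\<Sum>i<m. \<Sum>j<m. cnj (c i) * d j * bil m K (u i) (u j))"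
proof -
  have "bil m K (\<lambda>t. \<Sum>i<m. c i * u i t) (\<lambda>t. \<Sum>j<m. d j * u j t) =
    (\<Sum>s<m. \<Sum>t<m. \<Sum>i<m. \<Sum>j<m. cnj (c i) * d j * (cnj (u i s) * K s t * u j t))"
    unfolding bil_def by (simp add: cnj_sum sum_distrib_left sum_distrib_right mult_ac)
  also have "\<dots> = (\<Sum>s<m. \<Sum>i<m. \<Sum>t<m. \<Sum>j<m. cnj (c i) * d j * (cnj (u i s) * K s t * u j t))"
    by (rule sum.cong[OF refl], rule sum.swap)
  also have "\<dots> = (\<Sum>i<m. \<Sum>s<m. \<Sum>t<m. \<Sum>j<m. cnj (c i) * d j * (cnj (u i s) * K s t * u j t))"
    by (rule sum.swap)
  also have "\<dots> = (\<Sum>i<m. \<Sum>s<m. \<Sum>j<m. \<Sum>t<m. cnj (c i) * d j * (cnj (u i s) * K s t * u j t))"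
    by (rule sum.cong[OF refl], rule sum.cong[OF refl], rule sum.swap)
  also have "\<dots> = (\<Sum>i<m. \<Sum>j<m. \<Sum>s<m. \<Sum>t<m. cnj (c i) * d j * (cnj (u i s) * K s t * u j t))"
    by (rule sum.cong[OF refl], rule sum.swap)
  also have "\<dots> = (\<Sum>i<m. \<Sum>j<m. cnj (c i) * d j * bil m K (u i) (u j))"
    unfolding bil_def by (simp add: sum_distrib_left)
  finally show ?thesis .
qed

lemma comb_ip:
  assumes "orthonormal_basis m u"
  shows "(\<Sum>t<m. cnj (\<Sum>i<m. c i * u i t) * (\<Sum>j<m. d j * u j t)) = (\<Sum>i<m. cnj (c i) * d i)"
proof -
  have "(\<Sum>t<m. cnj (\<Sum>i<m. c i * u i t) * (\<Sum>j<m. d j * u j t)) =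
     (\<Sum>t<m. \<Sum>i<m. \<Sum>j<m. cnj (c i) * d j * (cnj (u i t) * u j t))"
    by (simp add: cnj_sum sum_distrib_left sum_distrib_right mult_ac)
  also have "\<dots> = (\<Sum>i<m. \<Sum>t<m. \<Sum>j<m. cnj (c i) * d j * (cnj (u i t) * u j t))"
    by (rule sum.swap)
  also have "\<dots> = (\<Sum>i<m. \<Sum>j<m. \<Sum>t<m. cnj (c i) * d j * (cnj (u i t) * u j t))"
    by (rule sum.cong[OF refl], rule sum.swap)
  also have "\<dots> = (\<Sum>i<m. \<Sum>j<m. cnj (c i) * d j * (if i = j then 1 else 0))"
    using assms unfolding orthonormal_basis_def by (simp add: sum_distrib_left[symmetric])
  also have "\<dots> = (\<Sum>i<m. cnj (c i) * d i)"
    by (rule sum.cong[OF refl]) (simp add: sdr2)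
  finally show ?thesis .
qed

lemma trace_complete:
  assumes "\<forall>s<m. \<forall>t<m. (\<Sum>k<m. cnj (u k s) * u k t) = (if s = t then 1 else 0)"
  shows "(\<Sum>i<m. bil m K (u i) (u i)) = tr m K"
proof -
  have "(\<Sum>i<m. bil m K (u i) (u i)) = (\<Sum>i<m. \<Sum>s<m. \<Sum>t<m. K s t * (cnj (u i s) * u i t))"
    unfolding bil_def by (simp add: mult_ac)
  also have "\<dots> = (\<Sum>s<m. \<Sum>i<m. \<Sum>t<m. K s t * (cnj (u i s) * u i t))" by (rule sum.swap)
  also have "\<dots> = (\<Sum>s<m. \<Sum>t<m. \<Sum>i<m. K s t * (cnj (u i s) * u i t))"
    by (rule sum.cong[OF refl], rule sum.swap)
  also have "\<dots> = (\<Sum>s<m. \<Sum>t<m. K s t * (if s = t then 1 else 0))"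
    using assms by (simp add: sum_distrib_left[symmetric])
  also have "\<dots> = tr m K" unfolding tr_def by (rule sum.cong[OF refl]) (simp add: sdr2)
  finally show ?thesis .
qed


lemma fill:
  "tr n K = 0 \<Longrightarrow> \<exists>g. orthonormal_basis n g \<and> (\<forall>l<n. bil n K (g l) (g l) = 0)"
proof (induction n arbitrary: K)
  case 0
  then show ?case by (simp add: orthonormal_basis_def)
next
  case (Suc n)
  define m where "m = Suc n"
  have trK: "tr m K = 0" using Suc.prems m_def by simp
  obtain x where xu: "ip m x x = 1" and xq: "bil m K x x = 0" using NR[of m K] trK m_def by auto
  obtain u where uo: "orthonormal_basis m u"
    and uc: "\<forall>s<m. \<forall>t<m. (\<Sum>k<m. cnj (u k s) * u k t) = (if s = t then 1 else 0)"
    and u0: "\<forall>t<m. u 0 t = x t" using hh[OF xu] m_def by auto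
  have bu0: "bil m K (u 0) (u 0) = 0" using xq u0 unfolding bil_def by simp
  define B where "B = (\<lambda>i j. bil m K (u (Suc i)) (u (Suc j)))"
  have "tr n B = 0"
  proof -
    have "tr m K = (\<Sum>i<m. bil m K (u i) (u i))" using trace_complete[OF uc] by simp
    also have "\<dots> = bil m K (u 0) (u 0) + tr n B"
      unfolding m_def B_def tr_def by (simp add: sum.lessThan_Suc_shift del: sum.lessThan_Suc)
    finally have "tr m K = bil m K (u 0) (u 0) + tr n B" .
    then show ?thesis using trK bu0 by simp
  qed
  then obtain h where ho: "orthonormal_basis n h" and hq: "\<forall>l<n. bil n B (h l) (h l) = 0"
    using Suc.IH by blast
  define c where "c = (\<lambda>l i. if l = 0 then (if i = 0 then (1::complex) else 0)
                              else (if i = 0 then 0 else h (l - 1) (i - 1)))"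
  define g where "g = (\<lambda>l t. \<Sum>i<m. c l i * u i t)"
  have c_on: "(\<Sum>i<m. cnj (c l i) * c l' i) = (if l = l' then 1 else 0)" if "l < m" "l' < m" for l l'
  proof (cases l)
    case 0
    then show ?thesis
    proof (cases l')
      case 0 with \<open>l = 0\<close> show ?thesis unfolding m_def c_def by (simp add: sum.lessThan_Suc_shift del: sum.lessThan_Suc)
    next
      case (Suc l'') with \<open>l = 0\<close> show ?thesis unfolding m_def c_def by (simp add: sum.lessThan_Suc_shift del: sum.lessThan_Suc)
    qed
  next
    case (Suc l1)
    then show ?thesis
    proof (cases l')
      case 0 with \<open>l = Suc l1\<close> show ?thesis unfolding m_def c_def by (simp add: sum.lessThan_Suc_shift del: sum.lessThan_Suc)
    next
      case (Suc l2)
      have "(\<Sum>i<m. cnj (c l i) * c l' i) = (\<Sum>i<n. cnj (h l1 i) * h l2 i)"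
        using \<open>l = Suc l1\<close> Suc unfolding m_def c_def by (simp add: sum.lessThan_Suc_shift del: sum.lessThan_Suc)
      also have "\<dots> = (if l1 = l2 then 1 else 0)" using ho that \<open>l = Suc l1\<close> Suc m_def
        unfolding orthonormal_basis_def by auto
      finally show ?thesis using \<open>l = Suc l1\<close> Suc by simp
    qed
  qed
  have "orthonormal_basis m g"
    unfolding orthonormal_basis_def g_def comb_ip[OF uo] using c_on by blast
  moreover have "bil m K (g l) (g l) = 0" if "l < m" for l
  proof -
    have "bil m K (g l) (g l) = (\<Sum>i<m. \<Sum>j<m. cnj (c l i) * c l j * bil m K (u i) (u j))"
      unfolding g_def by (rule comb_bil)
    also have "\<dots> = 0"
    proof (cases l)
      case 0
      then show ?thesis using bu0 unfolding m_def c_def by (simp add: sum.lessThan_Suc_shift del: sum.lessThan_Suc)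
    next
      case (Suc l1)
      have l1n: "l1 < n" using that Suc m_def by simp
      have "(\<Sum>i<m. \<Sum>j<m. cnj (c l i) * c l j * bil m K (u i) (u j)) =
            (\<Sum>i<n. \<Sum>j<n. cnj (h l1 i) * h l1 j * B i j)"
        unfolding m_def c_def B_def using Suc by (simp add: sum.lessThan_Suc_shift del: sum.lessThan_Suc)
      also have "\<dots> = bil n B (h l1) (h l1)" unfolding bil_def by (simp add: mult_ac)
      also have "\<dots> = 0" using hq l1n by simp
      finally show ?thesis .
    qed
    finally show ?thesis .
  qed
  ultimately show ?case unfolding m_def by blast
qed


lemma on2:
  assumes "cnj \<alpha> * \<alpha> + cnj \<beta> * \<beta> = 1"
  shows "orthonormal_basis 2 (\<lambda>(k::nat) (t::nat). if k = 0 then (if t = 0 then \<alpha> else \<beta>)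
                                      else (if t = 0 then - cnj \<beta> else cnj \<alpha>))"
  using assms unfolding orthonormal_basis_def
  by (auto simp: numeral_2_eq_2 less_Suc_eq algebra_simps)

lemma quad: fixes A b C s :: complex assumes "A \<noteq> 0" "s * s = b * b + 4 * A * C"
  shows "((-b+s)/(2*A))^2 * A - C + (-b+s)/(2*A) * b = 0"
proof -
  have "((-b+s)/(2*A))^2 * A - C + (-b+s)/(2*A) * b = (s * s - b * b - 4 * A * C) / (4 * A)"
    using assms(1) by (simp add: field_simps power2_eq_square)
  then show ?thesis using assms(2) by simp
qed

lemma two:
  fixes R :: "nat \<Rightarrow> nat \<Rightarrow> complex"
  shows "\<exists>e. orthonormal_basis 2 e \<and> (\<Sum>b<2. \<Sum>b'<2. e 0 b * R b b' * cnj (e 1 b')) = 0"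
proof -
  have "\<exists>\<alpha> \<beta>. (\<alpha> \<noteq> 0 \<or> \<beta> \<noteq> 0) \<and> \<alpha>^2 * R 0 1 - \<beta>^2 * R 1 0 + \<alpha> * \<beta> * (R 1 1 - R 0 0) = 0"
  proof (cases "R 0 1 = 0")
    case True
    then show ?thesis by (intro exI[of _ 1] exI[of _ 0]) simp
  next
    case False
    define b where "b = R 1 1 - R 0 0"
    define \<alpha> where "\<alpha> = (- b + csqrt (b^2 + 4 * R 0 1 * R 1 0)) / (2 * R 0 1)"
    have "\<alpha>^2 * R 0 1 - R 1 0 + \<alpha> * (R 1 1 - R 0 0) = 0"
      unfolding \<alpha>_def b_def[symmetric]
      by (rule quad[OF False]) (simp flip: power2_eq_square)
    then show ?thesis by (intro exI[of _ \<alpha>] exI[of _ 1]) simp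
  qed
  then obtain \<alpha> \<beta> where nz: "\<alpha> \<noteq> 0 \<or> \<beta> \<noteq> 0"
    and eq: "\<alpha>^2 * R 0 1 - \<beta>^2 * R 1 0 + \<alpha> * \<beta> * (R 1 1 - R 0 0) = 0" by blast
  define \<nu> where "\<nu> = sqrt ((cmod \<alpha>)^2 + (cmod \<beta>)^2)"
  have pos: "(cmod \<alpha>)^2 + (cmod \<beta>)^2 > 0" using nz by (auto simp: add_pos_nonneg add_nonneg_pos)
  then have \<nu>0: "\<nu> > 0" unfolding \<nu>_def by simp
  define a where "a = \<alpha> / of_real \<nu>"
  define c where "c = \<beta> / of_real \<nu>"
  have "cnj a * a + cnj c * c = (cnj \<alpha> * \<alpha> + cnj \<beta> * \<beta>) / of_real (\<nu>^2)"
    unfolding a_def c_def by (simp add: power2_eq_square add_divide_distrib mult.commute)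
  also have "cnj \<alpha> * \<alpha> + cnj \<beta> * \<beta> = of_real ((cmod \<alpha>)^2 + (cmod \<beta>)^2)"
    by (simp add: mult.commute flip: complex_norm_square)
  also have "of_real (\<nu>^2) = of_real ((cmod \<alpha>)^2 + (cmod \<beta>)^2)"
    unfolding \<nu>_def using pos by simp
  finally have n1': "cnj a * a + cnj c * c = of_real ((cmod \<alpha>)^2 + (cmod \<beta>)^2) / of_real ((cmod \<alpha>)^2 + (cmod \<beta>)^2)" .
  have pz: "complex_of_real ((cmod \<alpha>)^2 + (cmod \<beta>)^2) \<noteq> 0"
    using pos by (metis of_real_eq_0_iff less_irrefl)
  have n1: "cnj a * a + cnj c * c = 1" unfolding n1' using pz by (rule divide_self)
  have "a^2 * R 0 1 - c^2 * R 1 0 + a * c * (R 1 1 - R 0 0) =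
        (\<alpha>^2 * R 0 1 - \<beta>^2 * R 1 0 + \<alpha> * \<beta> * (R 1 1 - R 0 0)) / of_real (\<nu>^2)"
    unfolding a_def c_def using \<nu>0 by (simp add: field_simps power2_eq_square)
  then have eq2: "a^2 * R 0 1 - c^2 * R 1 0 + a * c * (R 1 1 - R 0 0) = 0" using eq by simp
  let ?e = "(\<lambda>(k::nat) (t::nat). if k = 0 then (if t = 0 then a else c) else (if t = 0 then - cnj c else cnj a))"
  have "(\<Sum>b<2. \<Sum>b'<2. ?e 0 b * R b b' * cnj (?e 1 b')) =
        a^2 * R 0 1 - c^2 * R 1 0 + a * c * (R 1 1 - R 0 0)"
    by (simp add: numeral_2_eq_2 algebra_simps power2_eq_square)
  then show ?thesis using on2[OF n1] eq2 by (intro exI[of _ ?e]) simp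
qed


lemma adj_mult_10: "adj_mult M 1 0 = cnj (adj_mult M 0 1)"
  unfolding adj_mult_def by (simp add: numeral_2_eq_2 mult.commute)

lemma diag2I: "N 0 1 = 0 \<Longrightarrow> N 1 0 = 0 \<Longrightarrow> diagonal2 N"
  unfolding diagonal2_def by (auto simp: numeral_2_eq_2 less_Suc_eq)

lemma coeff_id:
  "coeff n (\<lambda>i i'. if i = i' then 1 else 0) eB eS psi l a b =
   (\<Sum>b'<2. \<Sum>l'<n. cnj (eB b b') * cnj (eS l l') * psi a b' l')" if "a < 2"
  using that unfolding coeff_def by (auto simp: numeral_2_eq_2 less_Suc_eq)

lemma sum2: "(\<Sum>i<2. f i) = f 0 + f (1::nat)" for f :: "nat \<Rightarrow> 'a::comm_monoid_add"
  by (simp add: numeral_2_eq_2)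

lemma P1:
  fixes n :: nat and psi :: "nat \<Rightarrow> nat \<Rightarrow> nat \<Rightarrow> complex"
  shows "\<exists>eA eB eS. orthonormal_basis 2 eA \<and> orthonormal_basis 2 eB \<and> orthonormal_basis n eS \<and>
            (\<forall>l<n. diagonal2 (adj_mult (coeff n eA eB eS psi l)))"
proof -
  define R where "R = (\<lambda>b b'. \<Sum>a<2. \<Sum>l<n. cnj (psi a b l) * psi a b' l)"
  obtain eB where eBo: "orthonormal_basis 2 eB"
    and eBR: "(\<Sum>b<2. \<Sum>b'<2. eB 0 b * R b b' * cnj (eB 1 b')) = 0" using two[of R] by blast
  define K where "K = (\<lambda>s t. \<Sum>a<2. \<Sum>b<2. \<Sum>b'<2. eB 0 b * cnj (eB 1 b') * cnj (psi a b s) * psi a b' t)"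
  have "tr n K = (\<Sum>b<2. \<Sum>b'<2. eB 0 b * R b b' * cnj (eB 1 b'))"
    unfolding tr_def K_def R_def
    apply (simp only: sum2 sum_distrib_left sum_distrib_right sum.distrib[symmetric])
    apply (intro sum.cong refl)
    apply (simp add: algebra_simps)
    done
  then have trK: "tr n K = 0" using eBR by simp
  obtain g where go: "orthonormal_basis n g" and gq: "\<forall>l<n. bil n K (g l) (g l) = 0"
    using fill[OF trK] by blast
  define eA where "eA = (\<lambda>i i'::nat. if i = i' then (1::complex) else 0)"
  define eS where "eS = (\<lambda>l t. cnj (g l t))"
  have eAo: "orthonormal_basis 2 eA" unfolding orthonormal_basis_def eA_def
    by (auto simp: numeral_2_eq_2 less_Suc_eq)
  have eSo: "orthonormal_basis n eS" unfolding orthonormal_basis_def eS_def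
  proof (intro allI impI)
    fix k m assume "k < n" "m < n"
    then have "(\<Sum>t<n. cnj (g k t) * g m t) = (if k = m then 1 else 0)"
      using go unfolding orthonormal_basis_def by blast
    then have "cnj (\<Sum>t<n. cnj (g k t) * g m t) = (if k = m then 1 else 0)" by simp
    then show "(\<Sum>t<n. cnj (cnj (g k t)) * cnj (g m t)) = (if k = m then 1 else 0)"
      by (simp add: cnj_sum)
  qed
  have key: "adj_mult (coeff n eA eB eS psi l) 0 1 = bil n K (g l) (g l)" for l
    unfolding adj_mult_def
    apply (simp only: sum2)
    apply (simp only: coeff_id[unfolded eA_def[symmetric]] eS_def bil_def K_def pos2 one_less_numeral_iff semiring_norm(76))
    apply (simp only: sum2 cnj_sum complex_cnj_mult complex_cnj_cnj sum_product sum_distrib_left sum_distrib_right sum.distrib[symmetric])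
    apply (subst sum.swap)
    apply (intro sum.cong refl)
    apply (simp add: algebra_simps)
    done
  have "\<forall>l<n. diagonal2 (adj_mult (coeff n eA eB eS psi l))"
  proof (intro allI impI diag2I)
    fix l assume "l < n"
    then show "adj_mult (coeff n eA eB eS psi l) 0 1 = 0" using key gq by simp
    then show "adj_mult (coeff n eA eB eS psi l) 1 0 = 0" using adj_mult_10 by simp
  qed
  then show ?thesis using eAo eBo eSo by blast
qed


lemma coeff_swap:
  "coeff n eB eA eS psi l i j = coeff n eA eB eS (\<lambda>a b l. psi b a l) l j i"
  unfolding coeff_def
  apply (simp only: sum2 sum.distrib[symmetric])
  apply (intro sum.cong refl)
  apply (simp add: algebra_simps)
  done

theorem lemma5:
  fixes n :: nat and psi :: "nat \<Rightarrow> nat \<Rightarrow> nat \<Rightarrow> complex"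
  assumes "n \<ge> 2"
  shows "(\<exists>eA eB eS. orthonormal_basis 2 eA \<and> orthonormal_basis 2 eB \<and> orthonormal_basis n eS \<and>
            (\<forall>l<n. diagonal2 (adj_mult (coeff n eA eB eS psi l))))
       \<and> (\<exists>eA eB eS. orthonormal_basis 2 eA \<and> orthonormal_basis 2 eB \<and> orthonormal_basis n eS \<and>
            (\<forall>l<n. diagonal2 (mult_adj (coeff n eA eB eS psi l))))"
proof
  show "\<exists>eA eB eS. orthonormal_basis 2 eA \<and> orthonormal_basis 2 eB \<and> orthonormal_basis n eS \<and>
            (\<forall>l<n. diagonal2 (adj_mult (coeff n eA eB eS psi l)))" by (rule P1)
next
  obtain eA eB eS where o1: "orthonormal_basis 2 eA" and o2: "orthonormal_basis 2 eB"
    and o3: "orthonormal_basis n eS"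
    and d: "\<forall>l<n. diagonal2 (adj_mult (coeff n eA eB eS (\<lambda>a b l. psi b a l) l))"
    using P1[of n "\<lambda>a b l. psi b a l"] by blast
  have "diagonal2 (mult_adj (coeff n eB eA eS psi l))" if "l < n" for l
  proof -
    have "mult_adj (coeff n eB eA eS psi l) i k =
          cnj (adj_mult (coeff n eA eB eS (\<lambda>a b l. psi b a l) l) i k)" for i k
      unfolding mult_adj_def adj_mult_def coeff_swap[of n eB eA eS psi l]
      by (simp add: cnj_sum mult.commute)
    then show ?thesis using d that unfolding diagonal2_def by simp
  qed
  then show "\<exists>eA eB eS. orthonormal_basis 2 eA \<and> orthonormal_basis 2 eB \<and> orthonormal_basis n eS \<and>
            (\<forall>l<n. diagonal2 (mult_adj (coeff n eA eB eS psi l)))"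
    using o1 o2 o3 by blast
qed

end
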